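(* Let $\mathfrak g$ be any complex simple Lie algebra with a choice of positive roots $\Sigma^+$. Then, as a rational function, $$\sum_{\substack{\beta,\gamma\in\Sigma^+\\ \beta\neq\gamma}}\frac{\langle\beta,\gamma\rangle}{\beta\,\gamma}=0.$$
   Context: Roots are regarded as linear functions (on the real Cartan subspace, equivalently on its dual via the inner product), so $\frac{\langle\beta,\gamma\rangle}{\beta\gamma}$ is a rational function whose numerator is the constant $\langle\beta,\gamma\rangle$, the inner product on roots induced by the Killing form. *)

theory Defs
  imports "HOL-Analysis.Analysis"
begin

text \<open>Root systems of complex simple Lie algebras, realised in a real Euclidean
space (the real span of the roots, i.e. the dual of the real Cartan subspace, with
the inner product induced by the Killing form).\<close>

definition root_system :: "'a::euclidean_space set \<Rightarrow> bool" where
  "root_system R \<longleftrightarrow> finite R \<and> 0 \<notin> R \<and> span R = UNIV \<and>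
     (\<forall>\<alpha>\<in>R. \<forall>\<beta>\<in>R. \<beta> - (2 * (\<beta> \<bullet> \<alpha>) / (\<alpha> \<bullet> \<alpha>)) *\<^sub>R \<alpha> \<in> R) \<and>
     (\<forall>\<alpha>\<in>R. \<forall>\<beta>\<in>R. 2 * (\<beta> \<bullet> \<alpha>) / (\<alpha> \<bullet> \<alpha>) \<in> \<int>)"

definition reduced_root_system :: "'a::euclidean_space set \<Rightarrow> bool" where
  "reduced_root_system R \<longleftrightarrow> (\<forall>\<alpha>\<in>R. \<forall>c::real. c *\<^sub>R \<alpha> \<in> R \<longrightarrow> c = 1 \<or> c = -1)"

definition irreducible_root_system :: "'a::euclidean_space set \<Rightarrow> bool" where
  "irreducible_root_system R \<longleftrightarrow>
     \<not> (\<exists>R1 R2. R1 \<noteq> {} \<and> R2 \<noteq> {} \<and> R1 \<union> R2 = R \<and> R1 \<inter> R2 = {} \<and>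
            (\<forall>a\<in>R1. \<forall>b\<in>R2. a \<bullet> b = 0))"

definition positive_system :: "'a::euclidean_space set \<Rightarrow> 'a set \<Rightarrow> bool" where
  "positive_system R P \<longleftrightarrow> (\<exists>v. (\<forall>\<alpha>\<in>R. v \<bullet> \<alpha> \<noteq> 0) \<and> P = {\<alpha>\<in>R. 0 < v \<bullet> \<alpha>})"

end

theory Submission
  imports Defs "HOL-Computational_Algebra.Polynomial"
begin

lemma avoid_hyperplanes:
  fixes W :: "'a::euclidean_space set"
  assumes "finite W" "0 \<notin> W" shows "\<exists>y. \<forall>w\<in>W. w \<bullet> y \<noteq> 0"
  using assms
proof (induction W rule: finite_induct)
  case empty show ?case by simp
next
  case (insert w W)
  then obtain y where y: "\<forall>w'\<in>W. w' \<bullet> y \<noteq> 0" by auto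
  have w0: "w \<noteq> 0" using insert by auto
  show ?case
  proof (cases "w \<bullet> y = 0")
    case False thus ?thesis using y by auto
  next
    case True
    let ?B = "insert 0 ((\<lambda>w'. -(w' \<bullet> y)/(w' \<bullet> w)) ` W)"
    have "finite ?B" using insert by auto
    then obtain s :: real where s: "s \<notin> ?B"
      using ex_new_if_finite[OF infinite_UNIV_char_0] by blast
    have "\<forall>w'\<in>insert w W. w' \<bullet> (y + s *\<^sub>R w) \<noteq> 0"
    proof
      fix w' assume "w' \<in> insert w W"
      then consider "w' = w" | "w' \<in> W" by auto
      then show "w' \<bullet> (y + s *\<^sub>R w) \<noteq> 0"
      proof cases
        case 1 then show ?thesis using True s w0 by (simp add: inner_add_right)
      next
        case 2
        show ?thesis
        proof
          assume h: "w' \<bullet> (y + s *\<^sub>R w) = 0"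
          hence h2: "w' \<bullet> y + s * (w' \<bullet> w) = 0" by (simp add: inner_add_right)
          show False
          proof (cases "w' \<bullet> w = 0")
            case True with h2 y 2 show False by auto
          next
            case False
            hence "s = -(w' \<bullet> y)/(w' \<bullet> w)" using h2 by (simp add: field_simps)
            thus False using s 2 by auto
          qed
        qed
      qed
    qed
    thus ?thesis by blast
  qed
qed

lemma rs_refl:
  assumes "root_system R" "a \<in> R" "b \<in> R"
  shows "b - (2 * (b \<bullet> a) / (a \<bullet> a)) *\<^sub>R a \<in> R"
  using assms unfolding root_system_def by blast

lemma rs_neg:
  assumes "root_system R" "a \<in> R"
  shows "-a \<in> R"
proof -
  have "a \<noteq> 0" using assms unfolding root_system_def by auto
  hence "a \<bullet> a \<noteq> 0" by simp
  hence "a - (2 * (a \<bullet> a) / (a \<bullet> a)) *\<^sub>R a = -a" by (simp add: algebra_simps scaleR_2)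
  thus ?thesis using rs_refl[OF assms assms(2)] by simp
qed

lemma pos_indep:
  assumes "reduced_root_system R" "\<forall>\<alpha>\<in>R. v \<bullet> \<alpha> \<noteq> 0" "P = {\<alpha>\<in>R. 0 < v \<bullet> \<alpha>}"
    "a \<in> P" "b \<in> P" "a \<noteq> b"
  shows "b \<noteq> c *\<^sub>R a"
proof
  assume h: "b = c *\<^sub>R a"
  have "c = 1 \<or> c = -1" using assms h unfolding reduced_root_system_def by auto
  thus False
  proof
    assume "c = 1" thus False using h assms by simp
  next
    assume "c = -1" hence "b = -a" using h by simp
    thus False using assms by auto
  qed
qed

lemma pair_sum_zero:
  assumes rs: "root_system R" and red: "reduced_root_system R"
    and vR: "\<forall>\<alpha>\<in>R. v \<bullet> \<alpha> \<noteq> 0" and Pd: "P = {\<alpha>\<in>R. 0 < v \<bullet> \<alpha>}"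
    and aP: "a \<in> P" and az: "a \<bullet> z = 0"
  shows "(\<Sum>g\<in>P-{a}. (a \<bullet> g)/(g \<bullet> z)) = 0"
proof -
  define k where "k g = 2 * (g \<bullet> a) / (a \<bullet> a)" for g
  define s where "s g = g - k g *\<^sub>R a" for g
  define \<sigma> where "\<sigma> g = (if s g \<in> P then s g else - s g)" for g
  define f where "f g = (a \<bullet> g)/(g \<bullet> z)" for g
  have aR: "a \<in> R" using aP Pd by auto
  have a0: "a \<bullet> a \<noteq> 0" using aR rs unfolding root_system_def by auto
  have ks: "k (s g) = - k g" for g
    unfolding k_def s_def using a0 by (simp add: inner_diff_left field_simps)
  have ss: "s (s g) = g" for g unfolding s_def using ks[of g] by (simp add: s_def)
  have sneg: "s (- g) = - s g" for g unfolding s_def k_def by (simp add: algebra_simps)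
  have sR: "g \<in> R \<Longrightarrow> s g \<in> R" for g unfolding s_def k_def using rs_refl[OF rs aR] by blast
  have negP: "g \<in> P \<Longrightarrow> -g \<notin> P" for g using Pd by auto
  have \<sigma>P: "\<sigma> g \<in> P - {a}" if g: "g \<in> P - {a}" for g
  proof -
    have gR: "g \<in> R" using g Pd by auto
    have "\<sigma> g \<in> P"
    proof (cases "s g \<in> P")
      case True thus ?thesis by (simp add: \<sigma>_def)
    next
      case False
      have "s g \<in> R" using sR gR .
      hence "v \<bullet> s g < 0" using False vR Pd by force
      moreover have "- s g \<in> R" using rs_neg[OF rs \<open>s g \<in> R\<close>] .
      ultimately show ?thesis using False Pd by (simp add: \<sigma>_def)
    qed
    moreover have "\<sigma> g \<noteq> a"
    proof
      assume h: "\<sigma> g = a"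
      have "g = (1 + k g) *\<^sub>R a \<or> g = (k g - 1) *\<^sub>R a"
      proof (cases "s g \<in> P")
        case True hence "s g = a" using h by (simp add: \<sigma>_def)
        thus ?thesis unfolding s_def by (auto simp: algebra_simps)
      next
        case False hence "- s g = a" using h by (simp add: \<sigma>_def)
        thus ?thesis unfolding s_def by (auto simp: algebra_simps)
      qed
      thus False using pos_indep[OF red vR Pd aP, of g] g by auto
    qed
    ultimately show ?thesis by simp
  qed
  have \<sigma>\<sigma>: "\<sigma> (\<sigma> g) = g" if g: "g \<in> P - {a}" for g
  proof (cases "s g \<in> P")
    case True thus ?thesis using g by (simp add: \<sigma>_def ss)
  next
    case False
    have "s (- s g) = - g" by (simp add: sneg ss)
    thus ?thesis using False g negP by (simp add: \<sigma>_def)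
  qed
  have szz: "s g \<bullet> z = g \<bullet> z" for g unfolding s_def using az by (simp add: inner_diff_left)
  have asg: "a \<bullet> s g = - (a \<bullet> g)" for g
    unfolding s_def k_def using a0 by (simp add: inner_diff_right inner_commute field_simps)
  have f\<sigma>: "f (\<sigma> g) = - f g" for g
    unfolding \<sigma>_def f_def using szz[of g] asg[of g] by (auto simp: inner_minus_left)
  have "(\<Sum>g\<in>P-{a}. f (\<sigma> g)) = (\<Sum>g\<in>P-{a}. f g)"
    by (rule sum.reindex_bij_witness[where i=\<sigma> and j=\<sigma>]) (use \<sigma>P \<sigma>\<sigma> in \<open>blast+\<close>)
  hence "(\<Sum>g\<in>P-{a}. f g) = - (\<Sum>g\<in>P-{a}. f g)" by (simp add: f\<sigma> sum_negf)
  thus ?thesis unfolding f_def by simp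
qed


theorem mainTheorem17:
  fixes R P :: "'a::euclidean_space set" and x :: 'a
  assumes "root_system R" and "reduced_root_system R" and "irreducible_root_system R"
    and "positive_system R P"
    and "\<forall>\<alpha>\<in>R. \<alpha> \<bullet> x \<noteq> 0"
  shows "(\<Sum>(\<beta>, \<gamma>) \<in> {(\<beta>, \<gamma>). \<beta> \<in> P \<and> \<gamma> \<in> P \<and> \<beta> \<noteq> \<gamma>}.
            (\<beta> \<bullet> \<gamma>) / ((\<beta> \<bullet> x) * (\<gamma> \<bullet> x))) = 0"
proof -
  obtain v where vR: "\<forall>\<alpha>\<in>R. v \<bullet> \<alpha> \<noteq> 0" and Pd: "P = {\<alpha>\<in>R. 0 < v \<bullet> \<alpha>}"
    using assms(4) unfolding positive_system_def by auto
  have finR: "finite R" using assms(1) root_system_def by auto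
  have finP: "finite P" using Pd finR by auto
  have PR: "P \<subseteq> R" using Pd by auto
  have xne: "\<forall>\<alpha>\<in>P. \<alpha> \<bullet> x \<noteq> 0" using assms(5) PR by auto
  have P0: "0 \<notin> P" using Pd by auto
  define Pairs where "Pairs = {(\<beta>, \<gamma>). \<beta> \<in> P \<and> \<gamma> \<in> P \<and> \<beta> \<noteq> \<gamma>}"
  have Pairs_eq: "Pairs = Sigma P (\<lambda>\<beta>. P - {\<beta>})" unfolding Pairs_def by auto
  have finPairs: "finite Pairs" unfolding Pairs_eq using finP by auto
  define S where "S = (\<Sum>(\<beta>, \<gamma>) \<in> Pairs. (\<beta> \<bullet> \<gamma>) / ((\<beta> \<bullet> x) * (\<gamma> \<bullet> x)))"
  show ?thesis
  proof (cases "P = {}")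
    case True thus ?thesis by simp
  next
    case Pne: False
    define W where "W = P \<union> (\<lambda>(a,d). (a \<bullet> x) *\<^sub>R d - (d \<bullet> x) *\<^sub>R a) ` Pairs"
    have finW: "finite W" unfolding W_def using finP finPairs by auto
    have W0: "0 \<notin> W"
    proof
      assume "0 \<in> W"
      then obtain a d where ad: "a \<in> P" "d \<in> P" "a \<noteq> d" and e: "(a \<bullet> x) *\<^sub>R d - (d \<bullet> x) *\<^sub>R a = 0"
        using P0 unfolding W_def Pairs_def by auto
      have "d = ((d \<bullet> x) / (a \<bullet> x)) *\<^sub>R a"
        using e xne ad by (simp add: field_simps eq_vector_fraction_iff)
      thus False using pos_indep[OF assms(2) vR Pd ad] by blast
    qed
    obtain y where y: "\<forall>w\<in>W. w \<bullet> y \<noteq> 0" using avoid_hyperplanes[OF finW W0] by blast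
    have yP: "\<forall>a\<in>P. a \<bullet> y \<noteq> 0" using y unfolding W_def by auto
    have yW: "\<And>a d. a \<in> P \<Longrightarrow> d \<in> P \<Longrightarrow> a \<noteq> d \<Longrightarrow> (a \<bullet> x) * (d \<bullet> y) - (d \<bullet> x) * (a \<bullet> y) \<noteq> 0"
    proof -
      fix a d assume "a \<in> P" "d \<in> P" "a \<noteq> d"
      hence "((a \<bullet> x) *\<^sub>R d - (d \<bullet> x) *\<^sub>R a) \<bullet> y \<noteq> 0"
        using y unfolding W_def Pairs_def by auto
      thus "(a \<bullet> x) * (d \<bullet> y) - (d \<bullet> x) * (a \<bullet> y) \<noteq> 0" by (simp add: inner_diff_left)
    qed
    define t where "t a = -(a \<bullet> x)/(a \<bullet> y)" for a
    define z where "z a = x + t a *\<^sub>R y" for a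
    have za: "a \<bullet> z a = 0" if "a \<in> P" for a
      using yP that unfolding z_def t_def by (simp add: inner_add_right inner_diff_right)
    have zd: "d \<bullet> z a \<noteq> 0" if "a \<in> P" "d \<in> P" "d \<noteq> a" for a d
    proof
      assume h: "d \<bullet> z a = 0"
      have ay: "a \<bullet> y \<noteq> 0" using yP that by auto
      have "d \<bullet> x - (a \<bullet> x) * (d \<bullet> y) / (a \<bullet> y) = 0"
        using h unfolding z_def t_def by (simp add: inner_add_right inner_diff_right)
      hence "(d \<bullet> x) * (a \<bullet> y) - (a \<bullet> x) * (d \<bullet> y) = 0" using ay by (simp add: field_simps)
      thus False using yW[of a d] that by auto
    qed
    define H where "H \<tau> = (\<Sum>(\<beta>,\<gamma>)\<in>Pairs. (\<beta> \<bullet> \<gamma>) * (\<Prod>\<delta>\<in>P-{\<beta>,\<gamma>}. \<delta> \<bullet> (x + \<tau> *\<^sub>R y)))" for \<tau>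
    define Q where "Q = (\<Sum>(\<beta>,\<gamma>)\<in>Pairs. smult (\<beta> \<bullet> \<gamma>) (\<Prod>\<delta>\<in>P-{\<beta>,\<gamma>}. [:\<delta> \<bullet> x, \<delta> \<bullet> y:]))"
    have polyQ: "poly Q \<tau> = H \<tau>" for \<tau>
      unfolding Q_def H_def poly_sum case_prod_unfold
      by (simp add: poly_prod inner_add_right algebra_simps)
    have degQ: "degree Q \<le> card P - 2"
      unfolding Q_def case_prod_unfold
    proof (rule degree_sum_le[OF finPairs])
      fix p assume p: "p \<in> Pairs"
      have "degree (\<Prod>\<delta>\<in>P-{fst p, snd p}. [:\<delta> \<bullet> x, \<delta> \<bullet> y:]) \<le> (\<Sum>\<delta>\<in>P-{fst p, snd p}. 1)"
        apply (rule order_trans[OF degree_prod_sum_le[OF finite_Diff[OF finP]]])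
        apply (rule sum_mono)
        apply simp
        done
      also have "\<dots> = card P - 2" using p finP unfolding Pairs_def by (auto simp: card_Diff_subset)
      finally show "degree (smult (fst p \<bullet> snd p) (\<Prod>\<delta>\<in>P-{fst p, snd p}. [:\<delta> \<bullet> x, \<delta> \<bullet> y:])) \<le> card P - 2"
        using degree_smult_le order_trans by blast
    qed
    have Hroot: "H (t a) = 0" if aP: "a \<in> P" for a
    proof -
      define f where "f \<beta> \<gamma> = (\<beta> \<bullet> \<gamma>) * (\<Prod>\<delta>\<in>P-{\<beta>,\<gamma>}. \<delta> \<bullet> z a)" for \<beta> \<gamma>
      have "H (t a) = (\<Sum>\<beta>\<in>P. \<Sum>\<gamma>\<in>P-{\<beta>}. f \<beta> \<gamma>)"
        unfolding H_def Pairs_eq f_def z_def by (simp add: sum.Sigma[OF finP] finP)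
      also have "\<dots> = (\<Sum>\<gamma>\<in>P-{a}. f a \<gamma>) + (\<Sum>\<beta>\<in>P-{a}. \<Sum>\<gamma>\<in>P-{\<beta>}. f \<beta> \<gamma>)"
        using sum.remove[OF finP aP] by simp
      also have "(\<Sum>\<beta>\<in>P-{a}. \<Sum>\<gamma>\<in>P-{\<beta>}. f \<beta> \<gamma>) = (\<Sum>\<beta>\<in>P-{a}. f a \<beta>)"
      proof (rule sum.cong[OF refl])
        fix \<beta> assume b: "\<beta> \<in> P - {a}"
        have "a \<in> P - {\<beta>}" using b aP by auto
        hence "(\<Sum>\<gamma>\<in>P-{\<beta>}. f \<beta> \<gamma>) = f \<beta> a + (\<Sum>\<gamma>\<in>P-{\<beta>}-{a}. f \<beta> \<gamma>)"
          using sum.remove[of "P-{\<beta>}" a] finP by auto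
        also have "(\<Sum>\<gamma>\<in>P-{\<beta>}-{a}. f \<beta> \<gamma>) = 0"
        proof (rule sum.neutral, rule ballI)
          fix \<gamma> assume "\<gamma> \<in> P-{\<beta>}-{a}"
          hence "a \<in> P-{\<beta>,\<gamma>}" using b aP by auto
          thus "f \<beta> \<gamma> = 0" unfolding f_def using za[OF aP] finP by (auto simp: prod_zero_iff)
        qed
        also have "f \<beta> a = f a \<beta>" unfolding f_def by (simp add: inner_commute insert_commute)
        finally show "(\<Sum>\<gamma>\<in>P-{\<beta>}. f \<beta> \<gamma>) = f a \<beta>" by simp
      qed
      also have "(\<Sum>\<gamma>\<in>P-{a}. f a \<gamma>) = (\<Prod>\<delta>\<in>P-{a}. \<delta> \<bullet> z a) * (\<Sum>\<gamma>\<in>P-{a}. (a \<bullet> \<gamma>)/(\<gamma> \<bullet> z a))"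
        unfolding sum_distrib_left
      proof (rule sum.cong[OF refl])
        fix \<gamma> assume g: "\<gamma> \<in> P - {a}"
        have "(\<Prod>\<delta>\<in>P-{a}. \<delta> \<bullet> z a) = (\<gamma> \<bullet> z a) * (\<Prod>\<delta>\<in>P-{a}-{\<gamma>}. \<delta> \<bullet> z a)"
          using prod.remove[of "P-{a}" \<gamma>] finP g by auto
        moreover have "P-{a}-{\<gamma>} = P-{a,\<gamma>}" by auto
        moreover have "\<gamma> \<bullet> z a \<noteq> 0" using zd[OF aP] g by auto
        ultimately show "f a \<gamma> = (\<Prod>\<delta>\<in>P-{a}. \<delta> \<bullet> z a) * ((a \<bullet> \<gamma>)/(\<gamma> \<bullet> z a))"
          unfolding f_def by simp
      qed
      also have "(\<Sum>\<gamma>\<in>P-{a}. (a \<bullet> \<gamma>)/(\<gamma> \<bullet> z a)) = 0"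
        by (rule pair_sum_zero[OF assms(1,2) vR Pd aP za[OF aP]])
      finally show ?thesis by simp
    qed
    have H0: "H 0 = (\<Prod>\<delta>\<in>P. \<delta> \<bullet> x) * S"
      unfolding H_def S_def sum_distrib_left case_prod_unfold
    proof (rule sum.cong[OF refl])
      fix p assume p: "p \<in> Pairs"
      then obtain b c where bc: "p = (b,c)" "b \<in> P" "c \<in> P" "b \<noteq> c" unfolding Pairs_def by auto
      have "(\<Prod>\<delta>\<in>P. \<delta> \<bullet> x) = (\<Prod>\<delta>\<in>P-{b,c}. \<delta> \<bullet> x) * (\<Prod>\<delta>\<in>{b,c}. \<delta> \<bullet> x)"
        by (rule prod.subset_diff) (use bc finP in auto)
      also have "(\<Prod>\<delta>\<in>{b,c}. \<delta> \<bullet> x) = (b \<bullet> x) * (c \<bullet> x)" using bc by simp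
      finally have "(\<Prod>\<delta>\<in>P. \<delta> \<bullet> x) = (\<Prod>\<delta>\<in>P-{b,c}. \<delta> \<bullet> x) * ((b \<bullet> x) * (c \<bullet> x))" .
      moreover have "(b \<bullet> x) * (c \<bullet> x) \<noteq> 0" using xne bc by auto
      ultimately show "(fst p \<bullet> snd p) * (\<Prod>\<delta>\<in>P-{fst p, snd p}. \<delta> \<bullet> (x + 0 *\<^sub>R y)) =
          (\<Prod>\<delta>\<in>P. \<delta> \<bullet> x) * ((fst p \<bullet> snd p) / ((fst p \<bullet> x) * (snd p \<bullet> x)))"
        using bc by simp
    qed
    have Q0: "Q = 0"
    proof (rule ccontr)
      assume Qn: "Q \<noteq> 0"
      have inj: "inj_on t P"
      proof (rule inj_onI, rule ccontr)
        fix a d assume ad: "a \<in> P" "d \<in> P" "t a = t d" "a \<noteq> d"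
        hence "z a = z d" unfolding z_def by simp
        thus False using za[OF ad(2)] zd[OF ad(1,2)] ad(4) by auto
      qed
      have "card P = card (t ` P)" using inj by (simp add: card_image)
      also have "\<dots> \<le> card {\<tau>. poly Q \<tau> = 0}"
        by (rule card_mono) (use Qn poly_roots_finite[OF Qn] Hroot in \<open>auto simp: polyQ\<close>)
      also have "\<dots> \<le> degree Q" by (rule card_poly_roots_bound[OF Qn])
      also have "\<dots> \<le> card P - 2" by (rule degQ)
      finally have "card P \<le> card P - 2" .
      moreover have "card P > 0" using Pne finP by auto
      ultimately show False by linarith
    qed
    have "(\<Prod>\<delta>\<in>P. \<delta> \<bullet> x) * S = 0" using H0 polyQ[of 0] Q0 by simp
    moreover have "(\<Prod>\<delta>\<in>P. \<delta> \<bullet> x) \<noteq> 0" using xne finP by (auto simp: prod_zero_iff)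
    ultimately have "S = 0" by simp
    thus ?thesis unfolding S_def Pairs_def .
  qed
qed

end
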